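(* Let $\Omega_2=\{\omega_1,\omega_2\}$ with $\omega_1\neq\omega_2$, and $\mathcal{A}_2=2^{\Omega_2}$. A $q$-measure $\mu$ on $\mathcal{A}_2$ actualizes the coevent $\omega_1^*\oplus\omega_1^*\omega_2^*$ if and only if $\mu(\{\omega_2\})=0$ and $\mu(\Omega_2)\le\mu(\{\omega_1\})$.
   Context: Let $\Omega$ be a finite nonempty set and $\mathcal{A}=2^\Omega$. A coevent is a map $\phi:\mathcal{A}\to\{0,1\}$ with $\phi(\emptyset)=0$. For $\omega\in\Omega$ the evaluation map $\omega^*$ is the coevent with $\omega^*(A)=1$ if $\omega\in A$ and $0$ otherwise. Coevents are combined pointwise: $(\phi\oplus\psi)(A)=\phi(A)+\psi(A) \bmod 2$ and $(\phi\psi)(A)=\phi(A)\psi(A)$. For $f:\Omega\to[0,\infty)$ and a coevent $\phi$, the $q$-integral is $\int f\,d\phi=\int_0^\infty \phi(\{\omega\in\Omega: f(\omega)>\lambda\})\,d\lambda$ (Lebesgue measure in $\lambda$), and for $A\in\mathcal{A}$, $\int_A f\,d\phi=\int f\chi_A\,d\phi$. A $q$-measure is a map $\mu:\mathcal{A}\to[0,\infty)$ such that for all pairwise disjoint $A,B,C\in\mathcal{A}$: $\mu(A\cup B\cup C)=\mu(A\cup B)+\mu(A\cup C)+\mu(B\cup C)-\mu(A)-\mu(B)-\mu(C)$. The $q$-measure $\mu$ actualizes $\phi$ if there is a symmetric function $f:\Omega\times\Omega\to(0,\infty)$ such that for all $A\in\mathcal{A}$, $\mu(A)=\int g_A\,d\phi$,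 where $g_A(\omega')=\int_A f(\cdot,\omega')\,d\phi$ (the $q$-integral over $A$ of $\omega\mapsto f(\omega,\omega')$). *)

theory Defs
  imports "HOL-Analysis.Analysis"
begin

text \<open>A finite sample space is a finite set Omega of some type; events are subsets.
Coevents take values in Z_2, represented as bool (True = 1, False = 0).\<close>

definition coevent :: "'a set \<Rightarrow> ('a set \<Rightarrow> bool) \<Rightarrow> bool" where
  "coevent \<Omega> \<phi> \<longleftrightarrow> \<not> \<phi> {}"

definition eval_co :: "'a \<Rightarrow> ('a set \<Rightarrow> bool)" where
  "eval_co w = (\<lambda>A. w \<in> A)"

definition co_xor :: "('a set \<Rightarrow> bool) \<Rightarrow> ('a set \<Rightarrow> bool) \<Rightarrow> ('a set \<Rightarrow> bool)" where
  "co_xor \<phi> \<psi> = (\<lambda>A. \<phi> A \<noteq> \<psi> A)"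

definition co_mult :: "('a set \<Rightarrow> bool) \<Rightarrow> ('a set \<Rightarrow> bool) \<Rightarrow> ('a set \<Rightarrow> bool)" where
  "co_mult \<phi> \<psi> = (\<lambda>A. \<phi> A \<and> \<psi> A)"

definition q_integral :: "'a set \<Rightarrow> ('a set \<Rightarrow> bool) \<Rightarrow> ('a \<Rightarrow> real) \<Rightarrow> real" where
  "q_integral \<Omega> \<phi> f =
     (LBINT l:{0..}. (if \<phi> {w \<in> \<Omega>. f w > l} then 1 else 0))"

definition q_integral_on :: "'a set \<Rightarrow> ('a set \<Rightarrow> bool) \<Rightarrow> 'a set \<Rightarrow> ('a \<Rightarrow> real) \<Rightarrow> real" where
  "q_integral_on \<Omega> \<phi> A f = q_integral \<Omega> \<phi> (\<lambda>w. f w * indicator A w)"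

definition q_measure :: "'a set \<Rightarrow> ('a set \<Rightarrow> real) \<Rightarrow> bool" where
  "q_measure \<Omega> \<mu> \<longleftrightarrow>
     (\<forall>A. A \<subseteq> \<Omega> \<longrightarrow> \<mu> A \<ge> 0) \<and>
     (\<forall>A B C. A \<subseteq> \<Omega> \<and> B \<subseteq> \<Omega> \<and> C \<subseteq> \<Omega> \<and>
        A \<inter> B = {} \<and> A \<inter> C = {} \<and> B \<inter> C = {} \<longrightarrow>
        \<mu> (A \<union> B \<union> C) = \<mu> (A \<union> B) + \<mu> (A \<union> C) + \<mu> (B \<union> C) - \<mu> A - \<mu> B - \<mu> C)"

definition actualizes :: "'a set \<Rightarrow> ('a set \<Rightarrow> real) \<Rightarrow> ('a set \<Rightarrow> bool) \<Rightarrow> bool" where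
  "actualizes \<Omega> \<mu> \<phi> \<longleftrightarrow>
     (\<exists>f :: 'a \<Rightarrow> 'a \<Rightarrow> real.
        (\<forall>x\<in>\<Omega>. \<forall>y\<in>\<Omega>. f x y > 0 \<and> f x y = f y x) \<and>
        (\<forall>A. A \<subseteq> \<Omega> \<longrightarrow>
           \<mu> A = q_integral \<Omega> \<phi> (\<lambda>w'. q_integral_on \<Omega> \<phi> A (\<lambda>w. f w w'))))"

end

theory Submission
  imports Defs
begin

lemma phi_eq: "co_xor (eval_co w1) (co_mult (eval_co w1) (eval_co w2)) A = (w1 \<in> A \<and> w2 \<notin> A)"
  by (auto simp: co_xor_def co_mult_def eval_co_def)

lemma qint:
  assumes "w1 \<noteq> w2"
  shows "q_integral {w1,w2} (co_xor (eval_co w1) (co_mult (eval_co w1) (eval_co w2))) h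
       = max 0 (h w1 - max 0 (h w2))"
proof -
  let ?S = "{max 0 (h w2)..<h w1}"
  have e: "(\<lambda>l. indicator {0..} l *\<^sub>R (if co_xor (eval_co w1) (co_mult (eval_co w1) (eval_co w2)) {w \<in> {w1,w2}. h w > l} then 1 else 0))
     = (indicator ?S :: real \<Rightarrow> real)"
    using assms by (auto simp: phi_eq indicator_def fun_eq_iff)
  have "q_integral {w1,w2} (co_xor (eval_co w1) (co_mult (eval_co w1) (eval_co w2))) h
     = integral\<^sup>L lborel (indicator ?S :: real \<Rightarrow> real)"
    unfolding q_integral_def set_lebesgue_integral_def e ..
  also have "\<dots> = max 0 (h w1 - max 0 (h w2))"
    by (cases "max 0 (h w2) \<le> h w1") (auto simp: integral_indicator measure_lborel_Ico)
  finally show ?thesis .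
qed

lemma sub2: "A \<subseteq> {w1, w2} \<Longrightarrow> A = {} \<or> A = {w1} \<or> A = {w2} \<or> A = {w1, w2}"
  by blast

theorem theorem4p4:
  fixes w1 w2 :: 'a and \<mu> :: "'a set \<Rightarrow> real"
  assumes "w1 \<noteq> w2"
    and "q_measure {w1, w2} \<mu>"
  shows "actualizes {w1, w2} \<mu> (co_xor (eval_co w1) (co_mult (eval_co w1) (eval_co w2)))
     \<longleftrightarrow> (\<mu> {w2} = 0 \<and> \<mu> {w1, w2} \<le> \<mu> {w1})"
proof
  assume "actualizes {w1, w2} \<mu> (co_xor (eval_co w1) (co_mult (eval_co w1) (eval_co w2)))"
  then obtain f where f: "\<forall>x\<in>{w1,w2}. \<forall>y\<in>{w1,w2}. f x y > 0 \<and> f x y = f y x"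
    and m: "\<And>A. A \<subseteq> {w1,w2} \<Longrightarrow> \<mu> A = q_integral {w1,w2} (co_xor (eval_co w1) (co_mult (eval_co w1) (eval_co w2)))
             (\<lambda>w'. q_integral_on {w1,w2} (co_xor (eval_co w1) (co_mult (eval_co w1) (eval_co w2))) A (\<lambda>w. f w w'))"
    unfolding actualizes_def by blast
  have p: "f w1 w1 > 0" "f w1 w2 > 0" "f w2 w2 > 0" "f w2 w1 = f w1 w2" using f by blast+
  have 2: "\<mu> {w2} = 0" using m[of "{w2}"] assms(1) by (simp add: qint q_integral_on_def)
  have 1: "\<mu> {w1} = max 0 (f w1 w1 - f w1 w2)" using m[of "{w1}"] assms(1) p by (simp add: qint q_integral_on_def)
  have 3: "\<mu> {w1,w2} = max 0 (max 0 (f w1 w1 - f w1 w2) - max 0 (f w1 w2 - f w2 w2))"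
    using m[of "{w1,w2}"] assms(1) p by (simp add: qint q_integral_on_def)
  show "\<mu> {w2} = 0 \<and> \<mu> {w1, w2} \<le> \<mu> {w1}" using 1 2 3 by auto
next
  assume h: "\<mu> {w2} = 0 \<and> \<mu> {w1, w2} \<le> \<mu> {w1}"
  have nn: "\<mu> {w1,w2} \<ge> 0" using assms(2) unfolding q_measure_def by blast
  have "\<mu> ({} \<union> {} \<union> {}) = \<mu> ({} \<union> {}) + \<mu> ({} \<union> {}) + \<mu> ({} \<union> {}) - \<mu> {} - \<mu> {} - \<mu> {}"
    using assms(2) unfolding q_measure_def by (metis empty_subsetI inf_bot_left)
  then have e: "\<mu> {} = 0" by simp
  define c where "c = \<mu> {w1} - \<mu> {w1,w2} + 1"
  define f where "f = (\<lambda>x y. if x = w1 \<and> y = w1 then c + \<mu> {w1} else if x = w2 \<and> y = w2 then 1 else c)"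
  have c: "c \<ge> 1" using h c_def by auto
  have m1: "\<mu> {w1} \<ge> 0" using h nn by auto
  show "actualizes {w1, w2} \<mu> (co_xor (eval_co w1) (co_mult (eval_co w1) (eval_co w2)))"
    unfolding actualizes_def
  proof (intro exI[of _ f] conjI allI impI)
    show "\<forall>x\<in>{w1,w2}. \<forall>y\<in>{w1,w2}. f x y > 0 \<and> f x y = f y x"
      using c m1 assms(1) by (auto simp: f_def)
    fix A assume "A \<subseteq> {w1,w2}"
    then consider "A = {}" | "A = {w1}" | "A = {w2}" | "A = {w1,w2}" by blast
    then show "\<mu> A = q_integral {w1,w2} (co_xor (eval_co w1) (co_mult (eval_co w1) (eval_co w2)))
             (\<lambda>w'. q_integral_on {w1,w2} (co_xor (eval_co w1) (co_mult (eval_co w1) (eval_co w2))) A (\<lambda>w. f w w'))"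
    proof cases
      case 1 then show ?thesis using assms(1) e by (simp add: qint q_integral_on_def)
    next
      case 2 then show ?thesis using assms(1) c m1 by (simp add: qint q_integral_on_def f_def)
    next
      case 3 then show ?thesis using assms(1) h by (simp add: qint q_integral_on_def f_def)
    next
      case 4
      have "max 0 (c + \<mu> {w1} - c) - max 0 (c - 1) = \<mu> {w1,w2}" using c m1 by (simp add: c_def)
      then show ?thesis using 4 assms(1) c m1 nn by (simp add: qint q_integral_on_def f_def)
    qed
  qed
qed

end
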